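(* Let $m\ge2$, $r\ge1$, $k\ge1$, and let $\Phi:\Sigma_m^r\to\mathbb{R}$ be a function which depends only on the first $k$ coordinates of each of its $r$ variables. Let $\alpha\in\mathbb{R}$ be such that $\mathcal{M}_\Phi(\alpha)=\{\mu\in\mathcal{M}_{\rm inv}:\int_{\Sigma_m^r}\Phi\,d\mu^{\otimes r}=\alpha\}\neq\emptyset$. Then the supremum $\sup_{\mu\in\mathcal{M}_\Phi(\alpha)}h_\mu$ (which equals $h_{\rm top}(E_\Phi(\alpha))$) is attained by a $(k-1)$-Markov measure.
   Context: $\Sigma_m=\{0,\dots,m-1\}^{\mathbb{N}}$, points written $x=(x_1,x_2,\dots)$, with the left shift $\sigma$. $\mathcal{M}_{\rm inv}$ is the set of $\sigma$-invariant Borel probability measures on $\Sigma_m$, $h_\mu$ the measure-theoretic entropy, $\mu^{\otimes r}$ the $r$-fold product measure. $E_\Phi(\alpha)=\{x\in\Sigma_m:\lim_{n\to\infty}n^{-r}\sum_{1\le i_1,\dots,i_r\le n}\Phi(\sigma^{i_1}x,\dots,\sigma^{i_r}x)=\alpha\}$ and $h_{\rm top}$ is Bowen's topological entropy of a set. A $(k-1)$-Markov measure is a $\sigma$-invariant measure $\nu$ under which, for every $n>k-1$, the conditional law of $x_n$ given $x_1,\dots,x_{n-1}$ depends only on $x_{n-k+1},\dots,x_{n-1}$ (for $k=1$: a Bernoulli measure; for $k=2$: a stationary Markov measure). *)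

theory Defs
  imports "HOL-Probability.Probability"
begin

text \<open>A point x = (x_1, x_2, ...) is represented
  by a function x :: nat => nat with x_{j+1} = x j (0-based storage), and values < m.
  The sigma-algebra is the product sigma-algebra of discrete ones (= Borel sets of
  the product topology).\<close>
definition shift_space :: "nat \<Rightarrow> (nat \<Rightarrow> nat) measure" where
  "shift_space m = PiM UNIV (\<lambda>_. count_space {..<m})"

definition shift :: "(nat \<Rightarrow> nat) \<Rightarrow> (nat \<Rightarrow> nat)" where
  "shift x = (\<lambda>n. x (Suc n))"

definition inv_measures :: "nat \<Rightarrow> (nat \<Rightarrow> nat) measure set" where
  "inv_measures m = {\<mu>. sets \<mu> = sets (shift_space m) \<and> prob_space \<mu> \<and>
                        distr \<mu> (shift_space m) shift = \<mu>}"

definition cyl :: "nat \<Rightarrow> nat list \<Rightarrow> (nat \<Rightarrow> nat) set" where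
  "cyl m w = {x \<in> space (shift_space m). \<forall>i<length w. x i = w ! i}"

definition words :: "nat \<Rightarrow> nat \<Rightarrow> nat list set" where
  "words m n = {w. length w = n \<and> set w \<subseteq> {..<m}}"

text \<open>Measure-theoretic (Kolmogorov--Sinai) entropy of an invariant measure on the
  full shift, computed with the generating partition into 1-cylinders:
  h_mu = lim (1/n) * sum over words w of length n of - mu[w] log mu[w].\<close>
definition ms_entropy :: "nat \<Rightarrow> (nat \<Rightarrow> nat) measure \<Rightarrow> real" where
  "ms_entropy m \<mu> = lim (\<lambda>n. (1 / real n) *
      (\<Sum>w\<in>words m n. - measure \<mu> (cyl m w) * ln (measure \<mu> (cyl m w))))"

text \<open>Phi : Sigma_m^r -> R depends only on the first k coordinates of each variable.
  Elements of Sigma_m^r are families xs indexed by i < r (xs i is the i-th point).\<close>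
definition depends_on_first :: "nat \<Rightarrow> nat \<Rightarrow> nat \<Rightarrow> ((nat \<Rightarrow> nat \<Rightarrow> nat) \<Rightarrow> real) \<Rightarrow> bool" where
  "depends_on_first m r k \<Phi> \<longleftrightarrow>
     (\<forall>xs \<in> space (PiM {..<r} (\<lambda>_. shift_space m)).
      \<forall>ys \<in> space (PiM {..<r} (\<lambda>_. shift_space m)).
        (\<forall>i<r. \<forall>j<k. xs i j = ys i j) \<longrightarrow> \<Phi> xs = \<Phi> ys)"

definition level_measures ::
  "nat \<Rightarrow> nat \<Rightarrow> ((nat \<Rightarrow> nat \<Rightarrow> nat) \<Rightarrow> real) \<Rightarrow> real \<Rightarrow> (nat \<Rightarrow> nat) measure set" where
  "level_measures m r \<Phi> \<alpha> =
     {\<mu> \<in> inv_measures m. integral\<^sup>L (PiM {..<r} (\<lambda>_. \<mu>)) \<Phi> = \<alpha>}"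

text \<open>(k-1)-Markov measure: invariant, and for every n > k-1 the conditional law of x_n
  given x_1..x_{n-1} depends only on x_{n-k+1}..x_{n-1}; stated with cylinders:
  nu[w a] = nu[w] * q_n(last k-1 symbols of w, a) for all words w of length n-1.\<close>
definition markov_measure :: "nat \<Rightarrow> nat \<Rightarrow> (nat \<Rightarrow> nat) measure \<Rightarrow> bool" where
  "markov_measure m l \<nu> \<longleftrightarrow> \<nu> \<in> inv_measures m \<and>
     (\<exists>q :: nat \<Rightarrow> nat list \<Rightarrow> nat \<Rightarrow> real. \<forall>n. n > l \<longrightarrow>
        (\<forall>w\<in>words m (n - 1). \<forall>a<m.
           measure \<nu> (cyl m (w @ [a])) =
             measure \<nu> (cyl m w) * q n (drop (length w - l) w) a))"

end

theory Submission
  imports Defs "HOL-Real_Asymp.Real_Asymp"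
begin

definition gg :: "real \<Rightarrow> real \<Rightarrow> real" where
  "gg y x = y * ln (y / x)"

lemma logsum:
  fixes x y :: "'b \<Rightarrow> real"
  assumes fin: "finite B" and y0: "\<And>b. b \<in> B \<Longrightarrow> 0 \<le> y b"
    and yx: "\<And>b. b \<in> B \<Longrightarrow> y b \<le> x b"
  shows "gg (\<Sum>b\<in>B. y b) (\<Sum>b\<in>B. x b) \<le> (\<Sum>b\<in>B. gg (y b) (x b))"
proof (cases "(\<Sum>b\<in>B. y b) = 0")
  case True
  then have "\<forall>b\<in>B. y b = 0" using sum_nonneg_eq_0_iff[OF fin] y0 by blast
  then show ?thesis using True by (simp add: gg_def)
next
  case False
  define Y where "Y = (\<Sum>b\<in>B. y b)"
  define X where "X = (\<Sum>b\<in>B. x b)"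
  have Ypos: "Y > 0" using False y0 unfolding Y_def by (simp add: sum_nonneg order_less_le)
  have YX: "Y \<le> X" unfolding X_def Y_def by (rule sum_mono) (use yx in auto)
  hence Xpos: "X > 0" using Ypos by linarith
  define B' where "B' = {b\<in>B. y b > 0}"
  have finB': "finite B'" using fin unfolding B'_def by auto
  have B'sub: "B' \<subseteq> B" unfolding B'_def by auto
  have z: "\<And>b. b \<in> B - B' \<Longrightarrow> y b = 0" using y0 unfolding B'_def by force
  have Y': "Y = (\<Sum>b\<in>B'. y b)"
    unfolding Y_def by (rule sum.mono_neutral_right[OF fin B'sub]) (use z in auto)
  have R: "(\<Sum>b\<in>B. gg (y b) (x b)) = (\<Sum>b\<in>B'. gg (y b) (x b))"
    by (rule sum.mono_neutral_right[OF fin B'sub]) (use z in \<open>auto simp: gg_def\<close>)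
  have xpos: "\<And>b. b \<in> B' \<Longrightarrow> x b > 0" using yx unfolding B'_def by force
  have X': "(\<Sum>b\<in>B'. x b) \<le> X"
    unfolding X_def by (rule sum_mono2[OF fin B'sub]) (use y0 yx in force)
  have "gg Y X - (\<Sum>b\<in>B'. gg (y b) (x b)) = (\<Sum>b\<in>B'. y b * ln ((Y * x b) / (X * y b)))"
  proof -
    have "gg Y X = (\<Sum>b\<in>B'. y b * ln (Y / X))" unfolding gg_def Y' by (simp add: sum_distrib_right)
    moreover have "\<And>b. b \<in> B' \<Longrightarrow> y b * ln (Y / X) - gg (y b) (x b) = y b * ln ((Y * x b) / (X * y b))"
    proof -
      fix b assume b: "b \<in> B'"
      have yb: "y b > 0" using b unfolding B'_def by auto
      have xb: "x b > 0" using xpos b by auto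
      have "ln ((Y * x b) / (X * y b)) = ln Y + ln (x b) - ln X - ln (y b)"
        using Ypos Xpos yb xb by (simp add: ln_div ln_mult)
      moreover have "ln (Y / X) = ln Y - ln X" using Ypos Xpos by (simp add: ln_div)
      moreover have "ln (y b / x b) = ln (y b) - ln (x b)" using yb xb by (simp add: ln_div)
      ultimately have "ln (Y / X) = ln (y b / x b) + ln ((Y * x b) / (X * y b))" by linarith
      then show "y b * ln (Y / X) - gg (y b) (x b) = y b * ln ((Y * x b) / (X * y b))"
        unfolding gg_def by (simp add: algebra_simps)
    qed
    ultimately show ?thesis by (simp add: sum_subtractf[symmetric])
  qed
  also have "\<dots> \<le> (\<Sum>b\<in>B'. y b * ((Y * x b) / (X * y b) - 1))"
  proof (rule sum_mono)
    fix b assume b: "b \<in> B'"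
    have yb: "y b > 0" using b unfolding B'_def by auto
    have xb: "x b > 0" using xpos b by auto
    have "ln ((Y * x b) / (X * y b)) \<le> (Y * x b) / (X * y b) - 1"
      by (rule ln_le_minus_one) (use Ypos Xpos xb yb in simp)
    then show "y b * ln ((Y * x b) / (X * y b)) \<le> y b * ((Y * x b) / (X * y b) - 1)"
      using yb by (simp add: mult_left_mono)
  qed
  also have "\<dots> = (\<Sum>b\<in>B'. (Y / X) * x b - y b)"
    by (rule sum.cong) (auto simp: B'_def field_simps)
  also have "\<dots> = (Y / X) * (\<Sum>b\<in>B'. x b) - Y"
    by (simp add: sum_subtractf sum_distrib_left Y')
  also have "\<dots> \<le> (Y / X) * X - Y"
    using X' Ypos Xpos by (intro diff_right_mono mult_left_mono) auto
  also have "\<dots> = 0" using Xpos by simp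
  finally show ?thesis unfolding R X_def Y_def by simp
qed

lemma gg_nonpos:
  assumes "0 \<le> y" "y \<le> x"
  shows "gg y x \<le> 0"
proof (cases "y = 0")
  case True then show ?thesis by (simp add: gg_def)
next
  case False
  then have "y > 0" "x > 0" using assms by auto
  then have "ln (y / x) \<le> 0" using assms by simp
  then show ?thesis unfolding gg_def using \<open>y > 0\<close> by (simp add: mult_nonneg_nonpos)
qed


lemma space_shift_space: "space (shift_space m) = {x. \<forall>i. x i < m}"
  unfolding shift_space_def by (auto simp: space_PiM PiE_def Pi_def extensional_def)

lemma sets_cyl [measurable]: "cyl m w \<in> sets (shift_space m)"
proof -
  have "cyl m w = space (shift_space m) \<inter> (\<Inter>i<length w. {x. x i = w ! i})"
    unfolding cyl_def by auto
  also have "\<dots> \<in> sets (shift_space m)"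
  proof (cases "length w = 0")
    case True then show ?thesis by simp
  next
    case False
    have "\<And>i. {x \<in> space (shift_space m). x i = w ! i} \<in> sets (shift_space m)"
      unfolding shift_space_def by measurable
    then have "(\<Inter>i<length w. {x \<in> space (shift_space m). x i = w ! i}) \<in> sets (shift_space m)"
      using False by (intro sets.finite_INT) auto
    moreover have "(\<Inter>i<length w. {x \<in> space (shift_space m). x i = w ! i}) =
        space (shift_space m) \<inter> (\<Inter>i<length w. {x. x i = w ! i})" using False by auto
    ultimately show ?thesis by simp
  qed
  finally show ?thesis .
qed

lemma shift_measurable [measurable]: "shift \<in> measurable (shift_space m) (shift_space m)"
  unfolding shift_space_def
  by (rule measurable_PiM_single') (auto simp: shift_def space_PiM PiE_def extensional_def)

lemma cyl_Nil: "cyl m [] = space (shift_space m)"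
  unfolding cyl_def by auto

lemma cyl_snoc_Un: "cyl m w = (\<Union>a<m. cyl m (w @ [a]))"
  unfolding cyl_def by (auto simp: space_shift_space nth_append less_Suc_eq)

lemma cyl_snoc_disj: "disjoint_family_on (\<lambda>a. cyl m (w @ [a])) A"
  unfolding disjoint_family_on_def cyl_def by (auto simp: nth_append)

lemma cyl_cons_disj: "disjoint_family_on (\<lambda>a. cyl m (a # w)) A"
  unfolding disjoint_family_on_def cyl_def by auto

lemma shift_vimage_cyl: "shift -` cyl m w \<inter> space (shift_space m) = (\<Union>a<m. cyl m (a # w))"
  unfolding cyl_def shift_def by (auto simp: space_shift_space nth_Cons' less_Suc_eq_0_disj)

lemma cyl_mono: "cyl m (w @ v) \<subseteq> cyl m w"
  unfolding cyl_def by (auto simp: nth_append)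


lemma finite_words: "finite (words m n)"
proof -
  have "words m n \<subseteq> {w. set w \<subseteq> {..<m} \<and> length w = n}" unfolding words_def by auto
  then show ?thesis using finite_lists_length_eq[of "{..<m}" n] by (auto intro: finite_subset)
qed

lemma words_0: "words m 0 = {[]}" unfolding words_def by auto

lemma words_append: "words m (i + j) = (\<lambda>(v, u). v @ u) ` (words m i \<times> words m j)"
proof safe
  fix w assume "w \<in> words m (i + j)"
  then show "w \<in> (\<lambda>(v, u). v @ u) ` (words m i \<times> words m j)"
    unfolding words_def
    by (auto intro!: image_eqI[of _ _ "(take i w, drop i w)"] dest: in_set_takeD in_set_dropD)
qed (auto simp: words_def)

lemma inj_append_words: "inj_on (\<lambda>(v, u). v @ u) (words m i \<times> words m j)"
  unfolding inj_on_def words_def by auto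

lemma sum_words_append:
  "(\<Sum>w\<in>words m (i + j). f w) = (\<Sum>v\<in>words m i. \<Sum>u\<in>words m j. f (v @ u))"
  unfolding words_append sum.reindex[OF inj_append_words] sum.cartesian_product by (simp add: split_def comp_def)

lemma words_1: "words m (Suc 0) = (\<lambda>a. [a]) ` {..<m}"
  unfolding words_def by (auto simp: length_Suc_conv)

lemma sum_words_snoc:
  "(\<Sum>w\<in>words m (Suc n). f w) = (\<Sum>v\<in>words m n. \<Sum>a<m. f (v @ [a]))"
  using sum_words_append[where m=m and i=n and j=1 and f=f] by (simp add: words_1 sum.reindex inj_on_def)

lemma sum_words_cons:
  "(\<Sum>w\<in>words m (Suc n). f w) = (\<Sum>a<m. \<Sum>v\<in>words m n. f (a # v))"
  using sum_words_append[where m=m and i=1 and j=n and f=f] by (simp add: words_1 sum.reindex inj_on_def)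

lemma words_snocI: "w \<in> words m n \<Longrightarrow> a < m \<Longrightarrow> w @ [a] \<in> words m (Suc n)"
  unfolding words_def by auto

lemma words_consI: "w \<in> words m n \<Longrightarrow> a < m \<Longrightarrow> a # w \<in> words m (Suc n)"
  unfolding words_def by auto

locale shift_prob =
  fixes m :: nat and \<mu> :: "(nat \<Rightarrow> nat) measure"
  assumes sets_mu: "sets \<mu> = sets (shift_space m)" and prob: "prob_space \<mu>"
begin

interpretation prob_space \<mu> by (rule prob)

lemma space_mu: "space \<mu> = space (shift_space m)"
  using sets_mu by (rule sets_eq_imp_space_eq)

lemma cyl_in_sets [simp]: "cyl m w \<in> sets \<mu>"
  using sets_mu by simp

abbreviation p where "p w \<equiv> measure \<mu> (cyl m w)"

lemma p_nonneg: "0 \<le> p w" by simp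

lemma p_Nil: "p [] = 1"
  using prob_space by (simp add: cyl_Nil space_mu[symmetric])

lemma p_snoc: "p w = (\<Sum>a<m. p (w @ [a]))"
proof -
  have "p w = measure \<mu> (\<Union>a\<in>{..<m}. cyl m (w @ [a]))"
    using cyl_snoc_Un[of m w] by simp
  also have "\<dots> = (\<Sum>a<m. p (w @ [a]))"
    by (rule finite_measure_finite_Union) (auto intro: cyl_snoc_disj)
  finally show ?thesis .
qed

lemma p_mono: "p (w @ v) \<le> p w"
  by (rule finite_measure_mono[OF cyl_mono]) simp

lemma p_le_1: "p w \<le> 1" by simp

lemma sum_p_words: "(\<Sum>w\<in>words m n. p w) = 1"
proof (induction n)
  case 0 then show ?case by (simp add: words_0 p_Nil)
next
  case (Suc n)
  then show ?case by (simp add: sum_words_snoc p_snoc[symmetric])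
qed

end

locale shift_inv = shift_prob +
  assumes inv: "distr \<mu> (shift_space m) shift = \<mu>"
begin

interpretation prob_space \<mu> by (rule prob)

lemma p_cons: "p w = (\<Sum>a<m. p (a # w))"
proof -
  have "p w = measure (distr \<mu> (shift_space m) shift) (cyl m w)" using inv by simp
  also have "\<dots> = measure \<mu> (shift -` cyl m w \<inter> space \<mu>)"
    by (rule measure_distr) (auto simp: measurable_cong_sets[OF sets_mu refl])
  also have "\<dots> = measure \<mu> (\<Union>a\<in>{..<m}. cyl m (a # w))"
    using shift_vimage_cyl[of m w] by (simp add: space_mu)
  also have "\<dots> = (\<Sum>a<m. p (a # w))"
    by (rule finite_measure_finite_Union) (auto intro: cyl_cons_disj)
  finally show ?thesis .
qed

lemma p_prepend: "v \<in> words m j \<Longrightarrow> True" by simp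

lemma sum_p_prepend: "(\<Sum>v\<in>words m j. p (v @ u)) = p u"
proof (induction j arbitrary: u)
  case 0 then show ?case by (simp add: words_0)
next
  case (Suc j)
  have "(\<Sum>v\<in>words m (Suc j). p (v @ u)) = (\<Sum>a<m. \<Sum>v\<in>words m j. p (a # v @ u))"
    by (simp add: sum_words_cons)
  also have "\<dots> = (\<Sum>v\<in>words m j. \<Sum>a<m. p (a # (v @ u)))"
    by (rule sum.swap)
  also have "\<dots> = (\<Sum>v\<in>words m j. p (v @ u))"
    by (simp add: p_cons[symmetric])
  finally show ?case using Suc by simp
qed

end

lemma inv_measuresD: "\<mu> \<in> inv_measures m \<Longrightarrow> shift_inv m \<mu>"
  unfolding inv_measures_def shift_inv_def shift_inv_axioms_def shift_prob_def by auto


lemma cyl_disjoint: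
  assumes "v \<in> words m n" "w \<in> words m n" "v \<noteq> w"
  shows "cyl m v \<inter> cyl m w = {}"
proof -
  have "length v = n" "length w = n" using assms unfolding words_def by auto
  then obtain i where "i < n" "v ! i \<noteq> w ! i" using assms(3) nth_equalityI by metis
  then show ?thesis unfolding cyl_def using \<open>length v = n\<close> \<open>length w = n\<close> by auto
qed

lemma prod_emb_as_cyls:
  assumes J: "J \<subseteq> {..<N}" and A: "\<And>j. j \<in> J \<Longrightarrow> A j \<subseteq> {..<m}"
  shows "prod_emb UNIV (\<lambda>_. count_space {..<m}) J (PiE J A) =
    (\<Union>w\<in>{w \<in> words m N. \<forall>j\<in>J. w ! j \<in> A j}. cyl m w)"
proof safe
  fix x assume x: "x \<in> prod_emb UNIV (\<lambda>_. count_space {..<m}) J (PiE J A)"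
  then have xs: "\<forall>i. x i < m" and xa: "\<forall>j\<in>J. x j \<in> A j"
    by (auto simp: prod_emb_iff PiE_iff)
  let ?w = "map x [0..<N]"
  have "?w \<in> {w \<in> words m N. \<forall>j\<in>J. w ! j \<in> A j}"
    using xs xa J unfolding words_def by auto
  moreover have "x \<in> cyl m ?w" unfolding cyl_def using xs by (auto simp: space_shift_space)
  ultimately show "x \<in> (\<Union>w\<in>{w \<in> words m N. \<forall>j\<in>J. w ! j \<in> A j}. cyl m w)" by blast
next
  fix x w assume w: "w \<in> words m N" "\<forall>j\<in>J. w ! j \<in> A j" and x: "x \<in> cyl m w"
  have xs: "\<forall>i. x i < m" using x unfolding cyl_def by (auto simp: space_shift_space)
  have "\<forall>j\<in>J. x j = w ! j" using x J w unfolding cyl_def words_def by auto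
  then show "x \<in> prod_emb UNIV (\<lambda>_. count_space {..<m}) J (PiE J A)"
    using xs w(2) by (auto simp: prod_emb_iff PiE_iff)
qed

lemma measure_eq_cyl:
  fixes \<mu>1 \<mu>2 :: "(nat \<Rightarrow> nat) measure"
  assumes s1: "sets \<mu>1 = sets (shift_space m)" and s2: "sets \<mu>2 = sets (shift_space m)"
    and f1: "finite_measure \<mu>1" and f2: "finite_measure \<mu>2"
    and eq: "\<And>n w. w \<in> words m n \<Longrightarrow> measure \<mu>1 (cyl m w) = measure \<mu>2 (cyl m w)"
  shows "\<mu>1 = \<mu>2"
proof (rule measure_eqI_PiM_infinite)
  show "sets \<mu>1 = sets (PiM UNIV (\<lambda>_. count_space {..<m}))" using s1 unfolding shift_space_def .
  show "sets \<mu>2 = sets (PiM UNIV (\<lambda>_. count_space {..<m}))" using s2 unfolding shift_space_def .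
  show "finite_measure \<mu>1" by fact
  fix A J assume J: "finite (J :: nat set)" "J \<subseteq> UNIV" and A: "\<And>i. i \<in> J \<Longrightarrow> A i \<in> sets (count_space {..<m})"
  obtain N where N: "J \<subseteq> {..<N}" using J(1) finite_nat_bounded by blast
  let ?G = "{w \<in> words m N. \<forall>j\<in>J. w ! j \<in> A j}"
  have finG: "finite ?G" using finite_words[of m N] by auto
  have disj: "disjoint_family_on (cyl m) ?G"
    unfolding disjoint_family_on_def using cyl_disjoint by blast
  have A': "\<And>j. j \<in> J \<Longrightarrow> A j \<subseteq> {..<m}" using A by auto
  have e: "emeasure \<mu> (\<Union>w\<in>?G. cyl m w) = ennreal (\<Sum>w\<in>?G. measure \<mu> (cyl m w))"
    if "sets \<mu> = sets (shift_space m)" "finite_measure \<mu>" for \<mu> :: "(nat \<Rightarrow> nat) measure"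
  proof -
    interpret finite_measure \<mu> by fact
    have "measure \<mu> (\<Union>w\<in>?G. cyl m w) = (\<Sum>w\<in>?G. measure \<mu> (cyl m w))"
      by (rule finite_measure_finite_Union[OF finG _ disj]) (use that in auto)
    then show ?thesis by (simp add: emeasure_eq_measure)
  qed
  have "(\<Sum>w\<in>?G. measure \<mu>1 (cyl m w)) = (\<Sum>w\<in>?G. measure \<mu>2 (cyl m w))"
    by (rule sum.cong) (auto intro: eq)
  then show "emeasure \<mu>1 (prod_emb UNIV (\<lambda>_. count_space {..<m}) J (PiE J A)) =
         emeasure \<mu>2 (prod_emb UNIV (\<lambda>_. count_space {..<m}) J (PiE J A))"
    using e[OF s1 f1] e[OF s2 f2] prod_emb_as_cyls[OF N A'] by simp
qed


locale kblock =
  fixes m k :: nat and \<pi> :: "nat list \<Rightarrow> real"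
  assumes m_pos: "m > 0" and k_pos: "k \<ge> 1"
    and pi_nonneg: "\<And>w. w \<in> words m k \<Longrightarrow> 0 \<le> \<pi> w"
    and pi_sum: "(\<Sum>w\<in>words m k. \<pi> w) = 1"
    and pi_stat: "\<And>u. u \<in> words m (k - 1) \<Longrightarrow> (\<Sum>a<m. \<pi> (a # u)) = (\<Sum>a<m. \<pi> (u @ [a]))"
begin

definition rho :: "nat list \<Rightarrow> real" where
  "rho v = (\<Sum>t\<in>words m (k - length v). \<pi> (v @ t))"

definition ratio :: "nat list \<Rightarrow> nat \<Rightarrow> real" where
  "ratio v a = (if rho v > 0 then rho (v @ [a]) / rho v else (if a = 0 then 1 else 0))"

definition cond :: "nat list \<Rightarrow> nat \<Rightarrow> real" where
  "cond v a = ratio (drop (length v - (k - 1)) v) a"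

definition Q :: "nat list \<Rightarrow> real" where
  "Q w = (\<Prod>i<length w. cond (take i w) (w ! i))"

lemma words_length: "w \<in> words m n \<Longrightarrow> length w = n" unfolding words_def by auto

lemma words_append_mem: "v \<in> words m i \<Longrightarrow> t \<in> words m j \<Longrightarrow> v @ t \<in> words m (i + j)"
  unfolding words_def by auto

lemma rho_nonneg: assumes "v \<in> words m j" "j \<le> k" shows "0 \<le> rho v"
  unfolding rho_def
proof (rule sum_nonneg)
  fix t assume "t \<in> words m (k - length v)"
  then have "v @ t \<in> words m k" using words_append_mem[OF assms(1)] assms words_length by fastforce
  then show "0 \<le> \<pi> (v @ t)" by (rule pi_nonneg)
qed

lemma rho_snoc: assumes "v \<in> words m j" "j < k" shows "rho v = (\<Sum>a<m. rho (v @ [a]))"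
proof -
  have lv: "length v = j" using assms words_length by auto
  have e: "k - j = Suc (k - Suc j)" using assms by auto
  have "rho v = (\<Sum>t\<in>words m (Suc (k - Suc j)). \<pi> (v @ t))" unfolding rho_def lv e ..
  also have "\<dots> = (\<Sum>a<m. \<Sum>t\<in>words m (k - Suc j). \<pi> (v @ a # t))" by (rule sum_words_cons)
  also have "\<dots> = (\<Sum>a<m. rho (v @ [a]))" unfolding rho_def using lv by simp
  finally show ?thesis .
qed

lemma rho_Nil: "rho [] = 1" unfolding rho_def using pi_sum by simp

lemma rho_full: "v \<in> words m k \<Longrightarrow> rho v = \<pi> v"
  unfolding rho_def by (simp add: words_length words_0)

lemma ratio_nonneg: assumes "v \<in> words m j" "j < k" "a < m" shows "0 \<le> ratio v a"
  using rho_nonneg[OF words_snocI[OF assms(1) assms(3)]] assms unfolding ratio_def by auto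

lemma ratio_sum: assumes "v \<in> words m j" "j < k" shows "(\<Sum>a<m. ratio v a) = 1"
proof (cases "rho v > 0")
  case True
  then have "(\<Sum>a<m. ratio v a) = (\<Sum>a<m. rho (v @ [a])) / rho v"
    unfolding ratio_def by (simp add: sum_divide_distrib)
  also have "\<dots> = 1" using True rho_snoc[OF assms] by simp
  finally show ?thesis .
next
  case False
  then have "(\<Sum>a<m. ratio v a) = (\<Sum>a<m. if a = 0 then 1 else 0)"
    unfolding ratio_def by simp
  also have "\<dots> = 1" using m_pos by (simp add: sum.delta)
  finally show ?thesis .
qed

lemma drop_words: assumes "v \<in> words m j"
  shows "drop (length v - (k - 1)) v \<in> words m (min j (k - 1))"
  using assms unfolding words_def by (auto dest: in_set_dropD)

lemma cond_nonneg: assumes "v \<in> words m j" "a < m" shows "0 \<le> cond v a"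
  unfolding cond_def using drop_words[OF assms(1)] k_pos assms(2)
  by (intro ratio_nonneg) auto

lemma cond_sum: assumes "v \<in> words m j" shows "(\<Sum>a<m. cond v a) = 1"
  unfolding cond_def using drop_words[OF assms(1)] k_pos
  by (intro ratio_sum) auto

lemma Q_Nil: "Q [] = 1" unfolding Q_def by simp

lemma Q_snoc: "Q (w @ [a]) = Q w * cond w a"
proof -
  have "Q (w @ [a]) = (\<Prod>i<Suc (length w). cond (take i (w @ [a])) ((w @ [a]) ! i))"
    unfolding Q_def by simp
  also have "\<dots> = (\<Prod>i<length w. cond (take i (w @ [a])) ((w @ [a]) ! i)) * cond w a"
    by (simp add: lessThan_Suc)
  also have "(\<Prod>i<length w. cond (take i (w @ [a])) ((w @ [a]) ! i)) = Q w"
    unfolding Q_def by (rule prod.cong) (auto simp: nth_append)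
  finally show ?thesis .
qed

lemma Q_nonneg: "w \<in> words m n \<Longrightarrow> 0 \<le> Q w"
proof (induction w arbitrary: n rule: rev_induct)
  case Nil then show ?case by (simp add: Q_Nil)
next
  case (snoc a w)
  then have "w \<in> words m (length w)" "a < m" unfolding words_def by auto
  then show ?case using snoc.IH by (simp add: Q_snoc cond_nonneg)
qed

lemma Q_snoc_sum: "(\<Sum>a<m. Q (w @ [a])) = Q w" if "w \<in> words m n"
  using cond_sum[OF that] by (simp add: Q_snoc sum_distrib_left[symmetric])

lemma Q_rho: "w \<in> words m j \<Longrightarrow> j \<le> k \<Longrightarrow> Q w = rho w"
proof (induction w arbitrary: j rule: rev_induct)
  case Nil then show ?case by (simp add: Q_Nil rho_Nil)
next
  case (snoc a w)
  have j: "j = Suc (length w)" using words_length[OF snoc.prems(1)] by simp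
  have w: "w \<in> words m (length w)" and a: "a < m" using snoc.prems(1) unfolding words_def by auto
  have lw: "length w < k" using j snoc.prems(2) by simp
  have Qw: "Q w = rho w" using snoc.IH[OF w] lw by simp
  have c: "cond w a = ratio w a" unfolding cond_def using lw by simp
  show ?case
  proof (cases "rho w > 0")
    case True
    have "Q (w @ [a]) = rho w * (rho (w @ [a]) / rho w)"
      unfolding Q_snoc Qw c ratio_def using True by simp
    also have "\<dots> = rho (w @ [a])" using True by simp
    finally show ?thesis .
  next
    case False
    then have r0: "rho w = 0" using rho_nonneg[OF w] lw by simp
    have "\<forall>b\<in>{..<m}. rho (w @ [b]) = 0"
    proof -
      have "(\<Sum>b<m. rho (w @ [b])) = 0" using rho_snoc[OF w lw] r0 by simp
      moreover have "\<forall>b\<in>{..<m}. 0 \<le> rho (w @ [b])"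
        using rho_nonneg[OF words_snocI[OF w]] lw by auto
      ultimately show ?thesis using sum_nonneg_eq_0_iff[of "{..<m}" "\<lambda>b. rho (w @ [b])"] by simp
    qed
    then have "rho (w @ [a]) = 0" using a by simp
    moreover have "Q (w @ [a]) = 0" unfolding Q_snoc Qw r0 by simp
    ultimately show ?thesis by simp
  qed
qed

lemma Q_full: "w \<in> words m k \<Longrightarrow> Q w = \<pi> w"
  using Q_rho[of w k] rho_full by simp

lemma Q_cons_sum: "w \<in> words m n \<Longrightarrow> (\<Sum>a<m. Q (a # w)) = Q w"
proof (induction n arbitrary: w)
  case 0
  then have w: "w = []" by (simp add: words_0)
  have "(\<Sum>a<m. Q [a]) = (\<Sum>a<m. Q ([] @ [a]))" by simp
  also have "\<dots> = Q []" by (rule Q_snoc_sum[of _ 0]) (simp add: words_0)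
  finally show ?case using w by simp
next
  case (Suc n)
  show ?case
  proof (cases "Suc n \<le> k - 1")
    case True
    have lw: "length w = Suc n" using Suc.prems words_length by auto
    have Qa: "\<And>a. a < m \<Longrightarrow> Q (a # w) = rho (a # w)"
      using True Suc.prems by (intro Q_rho[of _ "Suc (Suc n)"]) (auto intro: words_consI)
    have "(\<Sum>a<m. Q (a # w)) = (\<Sum>a<m. \<Sum>t\<in>words m (k - Suc (Suc n)). \<pi> (a # (w @ t)))"
      by (rule sum.cong) (auto simp: Qa rho_def lw)
    also have "\<dots> = (\<Sum>t\<in>words m (k - Suc (Suc n)). \<Sum>a<m. \<pi> (a # (w @ t)))" by (rule sum.swap)
    also have "\<dots> = (\<Sum>t\<in>words m (k - Suc (Suc n)). \<Sum>a<m. \<pi> ((w @ t) @ [a]))"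
    proof (rule sum.cong[OF refl])
      fix t assume "t \<in> words m (k - Suc (Suc n))"
      moreover have "Suc n + (k - Suc (Suc n)) = k - 1" using True by arith
      ultimately have "w @ t \<in> words m (k - 1)" using words_append_mem[OF Suc.prems] by metis
      then show "(\<Sum>a<m. \<pi> (a # (w @ t))) = (\<Sum>a<m. \<pi> ((w @ t) @ [a]))" by (rule pi_stat)
    qed
    also have "\<dots> = (\<Sum>t\<in>words m (Suc (k - Suc (Suc n))). \<pi> (w @ t))"
      by (simp add: sum_words_snoc)
    also have "\<dots> = Q w"
    proof -
      have e: "Suc (k - Suc (Suc n)) = k - length w" using True lw by simp
      have "Q w = rho w" using Q_rho[OF Suc.prems] True by simp
      then show ?thesis unfolding rho_def e by (rule sym)
    qed
    finally show ?thesis .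
  next
    case False
    have "w \<noteq> []" using Suc.prems words_length by fastforce
    then obtain w' b where wb: "w = w' @ [b]" using append_butlast_last_id by metis
    have w': "w' \<in> words m n" using Suc.prems wb unfolding words_def by auto
    have lw': "length w' = n" using w' words_length by auto
    have c: "cond (a # w') b = cond w' b" for a
    proof -
      have "length (a # w') - (k - 1) = Suc (length w' - (k - 1))" using False lw' by simp
      then show ?thesis unfolding cond_def by simp
    qed
    have qa: "Q (a # w) = Q (a # w') * cond w' b" for a
      using Q_snoc[of "a # w'" b] c[of a] wb by simp
    have "(\<Sum>a<m. Q (a # w)) = (\<Sum>a<m. Q (a # w') * cond w' b)"
      by (rule sum.cong[OF refl]) (rule qa)
    also have "\<dots> = (\<Sum>a<m. Q (a # w')) * cond w' b" by (rule sum_distrib_right[symmetric])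
    also have "\<dots> = Q w' * cond w' b" using Suc.IH[OF w'] by simp
    also have "\<dots> = Q w" using wb Q_snoc[of w' b] by simp
    finally show ?thesis .
  qed
qed

end


context kblock
begin

definition Mc :: "nat \<Rightarrow> nat measure" where "Mc = (\<lambda>_. count_space {..<m})"

definition Pk :: "nat \<Rightarrow> (nat \<Rightarrow> nat) \<Rightarrow> nat measure" where
  "Pk i x = density (count_space {..<m}) (\<lambda>a. ennreal (cond (map x [0..<i]) a))"

lemma space_PiM_Mc: "x \<in> space (PiM {0..<i} Mc) \<Longrightarrow> map x [0..<i] \<in> words m i"
  unfolding Mc_def words_def by (auto simp: space_PiM PiE_iff)

lemma emeasure_Pk:
  assumes "X \<subseteq> {..<m}"
  shows "emeasure (Pk i x) X = (\<Sum>a\<in>X. ennreal (cond (map x [0..<i]) a))"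
proof -
  have "emeasure (Pk i x) X = (\<integral>\<^sup>+ a. ennreal (cond (map x [0..<i]) a) * indicator X a \<partial>count_space {..<m})"
    unfolding Pk_def using assms by (intro emeasure_density) auto
  also have "\<dots> = (\<Sum>a<m. ennreal (cond (map x [0..<i]) a) * indicator X a)"
    by (rule nn_integral_count_space_finite) simp
  also have "\<dots> = (\<Sum>a\<in>X. ennreal (cond (map x [0..<i]) a))"
  proof -
    have "(\<Sum>a<m. ennreal (cond (map x [0..<i]) a) * indicator X a) =
        (\<Sum>a<m. if a \<in> X then ennreal (cond (map x [0..<i]) a) else 0)"
      by (rule sum.cong) (auto simp: indicator_def)
    also have "\<dots> = (\<Sum>a\<in>{..<m} \<inter> X. ennreal (cond (map x [0..<i]) a))"
      by (rule sum.inter_restrict[symmetric]) simp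
    also have "{..<m} \<inter> X = X" using assms by blast
    finally show ?thesis .
  qed
  finally show ?thesis .
qed

lemma prob_space_Pk: assumes "x \<in> space (PiM {0..<i} Mc)" shows "prob_space (Pk i x)"
proof (rule prob_spaceI)
  have sp: "space (Pk i x) = {..<m}" unfolding Pk_def by simp
  have "emeasure (Pk i x) {..<m} = (\<Sum>a<m. ennreal (cond (map x [0..<i]) a))"
    by (rule emeasure_Pk) simp
  also have "\<dots> = ennreal (\<Sum>a<m. cond (map x [0..<i]) a)"
    using cond_nonneg[OF space_PiM_Mc[OF assms]] by (subst sum_ennreal) auto
  also have "\<dots> = 1" using cond_sum[OF space_PiM_Mc[OF assms]] by simp
  finally show "emeasure (Pk i x) (space (Pk i x)) = 1" unfolding sp .
qed

lemma PiM_Mc_count: "PiM {0..<i} Mc = count_space (PiE {0..<i} (\<lambda>_. {..<m}))"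
  unfolding Mc_def by (rule count_space_PiM_finite) auto

lemma measurable_Pk: "Pk i \<in> measurable (PiM {0..<i} Mc) (subprob_algebra (Mc i))"
proof (rule measurable_subprob_algebra)
  fix x assume "x \<in> space (PiM {0..<i} Mc)"
  then show "subprob_space (Pk i x)" using prob_space_Pk prob_space_imp_subprob_space by blast
next
  fix x show "sets (Pk i x) = sets (Mc i)" unfolding Pk_def Mc_def by simp
next
  fix A show "(\<lambda>x. emeasure (Pk i x) A) \<in> borel_measurable (PiM {0..<i} Mc)"
    unfolding PiM_Mc_count by simp
qed

lemma cylE_sets: assumes "w \<in> words m n" shows "PiE {0..<n} (\<lambda>i. {w ! i}) \<in> sets (PiM {0..<n} Mc)"
proof -
  have "\<And>i. i < n \<Longrightarrow> w ! i < m" using assms unfolding words_def by (auto simp: subset_iff dest: nth_mem)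
  then have "PiE {0..<n} (\<lambda>i. {w ! i}) \<subseteq> PiE {0..<n} (\<lambda>_. {..<m})" by (intro PiE_mono) auto
  then show ?thesis unfolding PiM_Mc_count by simp
qed

sublocale IT: Ionescu_Tulcea Pk Mc
  unfolding Ionescu_Tulcea_def using measurable_Pk prob_space_Pk by blast

definition nu :: "(nat \<Rightarrow> nat) measure" where "nu = IT.PF.lim"

lemma sets_nu: "sets nu = sets (shift_space m)"
  using IT.PF.sets_lim by (simp add: nu_def shift_space_def Mc_def)

lemma C_cyl:
  assumes "w \<in> words m n"
  shows "emeasure (IT.C 0 n (\<lambda>_. undefined)) (PiE {0..<n} (\<lambda>i. {w ! i})) = ennreal (Q w)"
  using assms
proof (induction w arbitrary: n rule: rev_induct)
  case Nil
  then have n: "n = 0" by (simp add: words_def)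
  show ?case unfolding n by (simp add: Q_Nil PiM_empty emeasure_return)
next
  case (snoc a v)
  have n: "n = Suc (length v)" using snoc.prems words_length by fastforce
  have v: "v \<in> words m (length v)" and a: "a < m" using snoc.prems unfolding words_def by auto
  let ?j = "length v"
  let ?X = "PiE {0..<Suc ?j} (\<lambda>i. {(v @ [a]) ! i})"
  let ?Xv = "PiE {0..<?j} (\<lambda>i. {v ! i})"
  let ?C = "IT.C 0 ?j (\<lambda>_. undefined)"
  have u: "(\<lambda>_. undefined) \<in> space (PiM {0..<0} Mc)" by (simp add: space_PiM)
  have Xsets: "?X \<in> sets (PiM {0..<Suc ?j} Mc)" by (rule cylE_sets[OF snoc.prems[unfolded n]])
  have Xvsets: "?Xv \<in> sets ?C" unfolding IT.sets_C[OF u] add_0 by (rule cylE_sets[OF v])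
  have ne: "space ?C \<noteq> {}"
    using prob_space.not_empty[OF IT.prob_space_C[OF u]] .
  have "emeasure (IT.C 0 (Suc ?j) (\<lambda>_. undefined)) ?X = emeasure (?C \<bind> IT.eP ?j) ?X" by simp
  also have "\<dots> = (\<integral>\<^sup>+x. emeasure (IT.eP ?j x) ?X \<partial>?C)"
    by (rule emeasure_bind[OF ne _ Xsets]) (simp add: measurable_cong_sets[OF IT.sets_C[OF u] refl])
  also have "\<dots> = (\<integral>\<^sup>+x. ennreal (cond v a) * indicator ?Xv x \<partial>?C)"
  proof (rule nn_integral_cong)
    fix x assume x: "x \<in> space ?C"
    then have xs: "x \<in> space (PiM {0..<?j} Mc)" using IT.space_C[OF u] by simp
    have "emeasure (IT.eP ?j x) ?X = Pk ?j x ((\<lambda>b. x(?j := b)) -` ?X \<inter> space (Mc ?j))"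
      by (rule IT.emeasure_eP[OF xs Xsets])
    also have "(\<lambda>b. x(?j := b)) -` ?X \<inter> space (Mc ?j) = (if x \<in> ?Xv then {a} else {})"
    proof -
      have ext: "x \<in> extensional {0..<?j}" using xs by (simp add: space_PiM PiE_iff)
      have iff: "x(?j := b) \<in> ?X \<longleftrightarrow> x \<in> ?Xv \<and> b = a" for b
      proof
        assume h: "x(?j := b) \<in> ?X"
        have "b = a" using PiE_mem[OF h, of ?j] by simp
        moreover have "x \<in> ?Xv"
        proof -
          have "\<forall>i\<in>{0..<?j}. x i \<in> {v ! i}"
          proof
            fix i assume i: "i \<in> {0..<?j}"
            then have "(x(?j := b)) i \<in> {(v @ [a]) ! i}" using PiE_mem[OF h, of i] by simp
            then show "x i \<in> {v ! i}" using i by (simp add: nth_append)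
          qed
          then show ?thesis using ext by (simp add: PiE_iff)
        qed
        ultimately show "x \<in> ?Xv \<and> b = a" by simp
      next
        assume h: "x \<in> ?Xv \<and> b = a"
        have "\<forall>i\<in>{0..<Suc ?j}. (x(?j := b)) i \<in> {(v @ [a]) ! i}"
        proof
          fix i assume i: "i \<in> {0..<Suc ?j}"
          show "(x(?j := b)) i \<in> {(v @ [a]) ! i}"
          proof (cases "i = ?j")
            case True then show ?thesis using h by simp
          next
            case False
            then have "i \<in> {0..<?j}" using i by simp
            then show ?thesis using PiE_mem[OF conjunct1[OF h]] False by (simp add: nth_append)
          qed
        qed
        moreover have "x(?j := b) \<in> extensional {0..<Suc ?j}" using ext by (auto simp: extensional_def)
        ultimately show "x(?j := b) \<in> ?X" by (simp add: PiE_iff)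
      qed
      show ?thesis
      proof (rule set_eqI)
        fix b
        have e1: "b \<in> (\<lambda>b. x(?j := b)) -` ?X \<inter> space (Mc ?j) \<longleftrightarrow> x(?j := b) \<in> ?X \<and> b < m"
          by (simp add: Mc_def)
        show "b \<in> (\<lambda>b. x(?j := b)) -` ?X \<inter> space (Mc ?j) \<longleftrightarrow> b \<in> (if x \<in> ?Xv then {a} else {})"
          unfolding e1 iff using a by (cases "x \<in> ?Xv") (simp_all only: if_True if_False singleton_iff empty_iff, blast+)
      qed
    qed
    also have "Pk ?j x (if x \<in> ?Xv then {a} else {}) = ennreal (cond v a) * indicator ?Xv x"
    proof (cases "x \<in> ?Xv")
      case True
      then have "map x [0..<?j] = v" by (intro nth_equalityI) (auto simp: PiE_iff)
      then show ?thesis using True a by (simp add: emeasure_Pk)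
    qed simp
    finally show "emeasure (IT.eP ?j x) ?X = ennreal (cond v a) * indicator ?Xv x" .
  qed
  also have "\<dots> = ennreal (cond v a) * emeasure ?C ?Xv"
    by (rule nn_integral_cmult_indicator[OF Xvsets])
  also have "\<dots> = ennreal (cond v a) * ennreal (Q v)" using snoc.IH[OF v] by simp
  also have "\<dots> = ennreal (Q v) * ennreal (cond v a)" by (rule mult.commute)
  also have "\<dots> = ennreal (Q (v @ [a]))"
    unfolding Q_snoc by (rule ennreal_mult[symmetric]) (use cond_nonneg[OF v a] Q_nonneg[OF v] in auto)
  finally show ?case unfolding n .
qed

lemma cyl_prod_emb: assumes "w \<in> words m n"
  shows "cyl m w = prod_emb UNIV Mc {0..<n} (PiE {0..<n} (\<lambda>i. {w ! i}))"
proof -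
  have lw: "length w = n" using assms words_length by auto
  show ?thesis
  proof (rule set_eqI)
    fix x
    have "restrict x {0..<n} \<in> PiE {0..<n} (\<lambda>i. {w ! i}) \<longleftrightarrow> (\<forall>i<n. x i = w ! i)"
      by (auto simp: PiE_iff)
    then show "x \<in> cyl m w \<longleftrightarrow> x \<in> prod_emb UNIV Mc {0..<n} (PiE {0..<n} (\<lambda>i. {w ! i}))"
      unfolding prod_emb_iff cyl_def lw by (auto simp: Mc_def space_shift_space)
  qed
qed

lemma emeasure_nu_cyl: assumes "w \<in> words m n" shows "emeasure nu (cyl m w) = ennreal (Q w)"
proof -
  let ?X = "PiE {0..<n} (\<lambda>i. {w ! i})"
  have X: "?X \<in> sets (PiM {0..<n} Mc)" by (rule cylE_sets[OF assms])
  have "emeasure nu (cyl m w) = emeasure IT.PF.lim (prod_emb UNIV Mc {0..<n} ?X)"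
    unfolding nu_def cyl_prod_emb[OF assms] ..
  also have "\<dots> = emeasure (IT.CI {0..<n}) ?X" by (rule IT.lim) (auto simp: X)
  also have "\<dots> = emeasure (IT.C 0 n (\<lambda>_. undefined)) (prod_emb {0..<n} Mc {0..<n} ?X)"
    by (rule IT.emeasure_CI) (auto simp: X)
  also have "prod_emb {0..<n} Mc {0..<n} ?X = ?X"
    using sets.sets_into_space[OF X] by (intro prod_emb_id) (simp add: space_PiM)
  also have "emeasure (IT.C 0 n (\<lambda>_. undefined)) ?X = ennreal (Q w)" by (rule C_cyl[OF assms])
  finally show ?thesis .
qed

lemma prob_space_nu: "prob_space nu"
proof (rule prob_spaceI)
  have sp: "space nu = cyl m []" using sets_eq_imp_space_eq[OF sets_nu] by (simp add: cyl_Nil)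
  show "emeasure nu (space nu) = 1" unfolding sp using emeasure_nu_cyl[of "[]" 0] by (simp add: words_0 Q_Nil)
qed

lemma measure_nu_cyl: assumes "w \<in> words m n" shows "measure nu (cyl m w) = Q w"
  using emeasure_nu_cyl[OF assms] Q_nonneg[OF assms] by (simp add: measure_def)

lemma nu_invariant: "distr nu (shift_space m) shift = nu"
proof (rule measure_eq_cyl[of _ m])
  interpret prob_space nu by (rule prob_space_nu)
  have meas: "shift \<in> measurable nu (shift_space m)"
    using shift_measurable by (simp add: measurable_cong_sets[OF sets_nu refl])
  show "sets (distr nu (shift_space m) shift) = sets (shift_space m)" by simp
  show "sets nu = sets (shift_space m)" by (rule sets_nu)
  show "finite_measure (distr nu (shift_space m) shift)"
    using prob_space_distr[OF meas] unfolding prob_space_def by blast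
  show "finite_measure nu" by (rule finite_measure_axioms)
  fix n w assume w: "w \<in> words m n"
  have "measure (distr nu (shift_space m) shift) (cyl m w) = measure nu (shift -` cyl m w \<inter> space nu)"
    by (rule measure_distr[OF meas]) simp
  also have "shift -` cyl m w \<inter> space nu = (\<Union>a\<in>{..<m}. cyl m (a # w))"
    using shift_vimage_cyl[of m w] sets_eq_imp_space_eq[OF sets_nu] by simp
  also have "measure nu (\<Union>a\<in>{..<m}. cyl m (a # w)) = (\<Sum>a<m. measure nu (cyl m (a # w)))"
    by (rule finite_measure_finite_Union) (auto intro: cyl_cons_disj simp: sets_nu)
  also have "\<dots> = (\<Sum>a<m. Q (a # w))"
    by (rule sum.cong[OF refl]) (auto intro!: measure_nu_cyl words_consI w)
  also have "\<dots> = Q w" by (rule Q_cons_sum[OF w])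
  also have "\<dots> = measure nu (cyl m w)" by (rule measure_nu_cyl[OF w, symmetric])
  finally show "measure (distr nu (shift_space m) shift) (cyl m w) = measure nu (cyl m w)" .
qed

lemma nu_inv_measures: "nu \<in> inv_measures m"
  unfolding inv_measures_def using sets_nu prob_space_nu nu_invariant by auto

lemma nu_markov: "markov_measure m (k - 1) nu"
  unfolding markov_measure_def
proof (intro conjI nu_inv_measures exI allI impI ballI)
  fix n w a assume n: "k - 1 < n" and w: "w \<in> words m (n - 1)" and a: "a < m"
  have lw: "length w = n - 1" using w words_length by auto
  have "measure nu (cyl m (w @ [a])) = Q (w @ [a])" by (rule measure_nu_cyl[OF words_snocI[OF w a]])
  also have "\<dots> = Q w * cond w a" by (rule Q_snoc)
  also have "\<dots> = measure nu (cyl m w) * ratio (drop (length w - (k - 1)) w) a"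
    unfolding measure_nu_cyl[OF w] cond_def ..
  finally show "measure nu (cyl m (w @ [a])) = measure nu (cyl m w) * (\<lambda>n. ratio) n (drop (length w - (k - 1)) w) a"
    by simp
qed

lemma nu_block: "w \<in> words m k \<Longrightarrow> measure nu (cyl m w) = \<pi> w"
  using measure_nu_cyl Q_full by simp

end


lemma cesaro_dec:
  fixes c :: "nat \<Rightarrow> real"
  assumes dec: "decseq c" and lim: "c \<longlonglongrightarrow> L"
  shows "(\<lambda>n. (1 / real n) * (\<Sum>j<n. c j)) \<longlonglongrightarrow> L"
proof (rule LIMSEQ_I)
  fix r :: real assume r: "0 < r"
  have geL: "\<And>j. L \<le> c j" using decseq_ge[OF dec lim] .
  obtain N where N: "\<And>n. n \<ge> N \<Longrightarrow> norm (c n - L) < r / 2"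
    using LIMSEQ_D[OF lim, of "r/2"] r by auto
  define K where "K = real N * (c 0 - L)"
  have K0: "K \<ge> 0" unfolding K_def using geL[of 0] by simp
  define no where "no = max (Suc N) (nat \<lceil>2 * K / r\<rceil> + 1)"
  show "\<exists>no. \<forall>n\<ge>no. norm ((1 / real n) * (\<Sum>j<n. c j) - L) < r"
  proof (intro exI allI impI)
    fix n assume n: "no \<le> n"
    have nN: "N < n" using n unfolding no_def by auto
    have npos: "real n > 0" using nN by simp
    have nK: "real n > 2 * K / r"
    proof -
      have "2 * K / r \<le> real (nat \<lceil>2 * K / r\<rceil>)" by linarith
      moreover have "nat \<lceil>2 * K / r\<rceil> + 1 \<le> n" using n unfolding no_def by auto
      ultimately show ?thesis by linarith
    qed
    have avg: "(1 / real n) * (\<Sum>j<n. c j) - L = (1 / real n) * (\<Sum>j<n. c j - L)"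
      using npos by (simp add: sum_subtractf field_simps)
    have low: "0 \<le> (\<Sum>j<n. c j - L)" using geL by (simp add: sum_nonneg)
    have split: "(\<Sum>j<n. c j - L) = (\<Sum>j\<in>{0..<N}. c j - L) + (\<Sum>j\<in>{N..<n}. c j - L)"
      using sum.atLeastLessThan_concat[of 0 N n "\<lambda>j. c j - L"] nN by (simp add: atLeast0LessThan)
    have s1: "(\<Sum>j\<in>{0..<N}. c j - L) \<le> K"
    proof -
      have "(\<Sum>j\<in>{0..<N}. c j - L) \<le> (\<Sum>j\<in>{0..<N}. c 0 - L)"
        using dec by (intro sum_mono) (auto simp: decseq_def)
      then show ?thesis unfolding K_def by simp
    qed
    have s2: "(\<Sum>j\<in>{N..<n}. c j - L) \<le> real n * (r / 2)"
    proof -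
      have "(\<Sum>j\<in>{N..<n}. c j - L) \<le> (\<Sum>j\<in>{N..<n}. r / 2)"
      proof (intro sum_mono)
        fix j assume "j \<in> {N..<n}"
        then have "norm (c j - L) < r / 2" using N by auto
        then show "c j - L \<le> r / 2" unfolding real_norm_def by linarith
      qed
      also have "\<dots> = real (n - N) * (r / 2)" by simp
      also have "\<dots> \<le> real n * (r / 2)" using r by (intro mult_right_mono) auto
      finally show ?thesis .
    qed
    have "(\<Sum>j<n. c j - L) < real n * r"
    proof -
      have "K < real n * r / 2" using nK r by (simp add: field_simps)
      then show ?thesis using split s1 s2 by linarith
    qed
    then have "(1 / real n) * (\<Sum>j<n. c j - L) < r" using npos by (simp add: field_simps)
    moreover have "0 \<le> (1 / real n) * (\<Sum>j<n. c j - L)" using low npos by simp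
    ultimately show "norm ((1 / real n) * (\<Sum>j<n. c j) - L) < r" using avg by simp
  qed
qed

context shift_prob
begin

interpretation prob_space \<mu> by (rule prob)

definition HH :: "nat \<Rightarrow> real" where
  "HH n = (\<Sum>w\<in>words m n. - measure \<mu> (cyl m w) * ln (measure \<mu> (cyl m w)))"

definition cc :: "nat \<Rightarrow> real" where
  "cc n = (\<Sum>w\<in>words m n. \<Sum>a<m. - gg (p (w @ [a])) (p w))"

lemma ms_entropy_HH: "ms_entropy m \<mu> = lim (\<lambda>n. (1 / real n) * HH n)"
  unfolding ms_entropy_def HH_def ..

lemma HH_0: "HH 0 = 0"
  by (simp add: HH_def words_0 p_Nil)

lemma local_step:
  "(\<Sum>a<m. - p (w @ [a]) * ln (p (w @ [a]))) = - p w * ln (p w) + (\<Sum>a<m. - gg (p (w @ [a])) (p w))"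
proof (cases "p w = 0")
  case True
  then have "\<forall>a\<in>{..<m}. p (w @ [a]) = 0"
    using p_snoc[of w] by (simp add: sum_nonneg_eq_0_iff)
  then show ?thesis using True by (simp add: gg_def)
next
  case False
  then have pw: "p w > 0" using p_nonneg[of w] by linarith
  have "\<And>a. - gg (p (w @ [a])) (p w) = - p (w @ [a]) * ln (p (w @ [a])) + p (w @ [a]) * ln (p w)"
  proof -
    fix a
    show "- gg (p (w @ [a])) (p w) = - p (w @ [a]) * ln (p (w @ [a])) + p (w @ [a]) * ln (p w)"
    proof (cases "p (w @ [a]) = 0")
      case True then show ?thesis by (simp add: gg_def)
    next
      case False
      then have "p (w @ [a]) > 0" using p_nonneg[of "w @ [a]"] by linarith
      then show ?thesis using pw by (simp add: gg_def ln_div algebra_simps)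
    qed
  qed
  then have "(\<Sum>a<m. - gg (p (w @ [a])) (p w)) =
      (\<Sum>a<m. - p (w @ [a]) * ln (p (w @ [a])) + p (w @ [a]) * ln (p w))"
    by (intro sum.cong) auto
  also have "\<dots> = (\<Sum>a<m. - p (w @ [a]) * ln (p (w @ [a]))) + (\<Sum>a<m. p (w @ [a])) * ln (p w)"
    by (simp only: sum.distrib sum_distrib_right)
  finally have "(\<Sum>a<m. - gg (p (w @ [a])) (p w)) =
      (\<Sum>a<m. - p (w @ [a]) * ln (p (w @ [a]))) + (\<Sum>a<m. p (w @ [a])) * ln (p w)" .
  then show ?thesis using p_snoc[of w] by simp
qed

lemma HH_Suc: "HH (Suc n) = HH n + cc n"
proof -
  have "HH (Suc n) = (\<Sum>w\<in>words m n. - p w * ln (p w) + (\<Sum>a<m. - gg (p (w @ [a])) (p w)))"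
    unfolding HH_def sum_words_snoc local_step ..
  also have "\<dots> = HH n + cc n" unfolding HH_def cc_def by (rule sum.distrib)
  finally show ?thesis .
qed

lemma HH_sum: "HH n = (\<Sum>j<n. cc j)"
  by (induction n) (simp_all add: HH_0 HH_Suc)

lemma cc_nonneg: "0 \<le> cc n"
  unfolding cc_def
proof (intro sum_nonneg)
  fix w a
  have "gg (p (w @ [a])) (p w) \<le> 0" by (rule gg_nonpos) (simp_all add: p_mono)
  then show "0 \<le> - gg (p (w @ [a])) (p w)" by simp
qed

end

context shift_inv
begin

interpretation prob_space \<mu> by (rule prob)

lemma cc_Suc_le: "cc (Suc n) \<le> cc n"
proof -
  have "cc (Suc n) = (\<Sum>b<m. \<Sum>w\<in>words m n. \<Sum>a<m. - gg (p (b # w @ [a])) (p (b # w)))"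
    unfolding cc_def sum_words_cons by simp
  also have "\<dots> = (\<Sum>w\<in>words m n. \<Sum>b<m. \<Sum>a<m. - gg (p (b # w @ [a])) (p (b # w)))"
    by (rule sum.swap)
  also have "\<dots> = (\<Sum>w\<in>words m n. \<Sum>a<m. \<Sum>b<m. - gg (p (b # w @ [a])) (p (b # w)))"
    by (rule sum.cong[OF refl], rule sum.swap)
  also have "\<dots> \<le> (\<Sum>w\<in>words m n. \<Sum>a<m. - gg (p (w @ [a])) (p w))"
  proof (intro sum_mono)
    fix w a
    have "gg (\<Sum>b<m. p (b # w @ [a])) (\<Sum>b<m. p (b # w)) \<le> (\<Sum>b<m. gg (p (b # w @ [a])) (p (b # w)))"
      by (rule logsum) (auto intro: p_mono[of "_ # w" "[a]", simplified])
    then show "(\<Sum>b<m. - gg (p (b # w @ [a])) (p (b # w))) \<le> - gg (p (w @ [a])) (p w)"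
      by (simp add: p_cons[symmetric] sum_negf)
  qed
  also have "\<dots> = cc n" unfolding cc_def ..
  finally show ?thesis .
qed

lemma cc_decseq: "decseq cc"
  using cc_Suc_le by (simp add: decseq_Suc_iff)

lemma cc_convergent: "convergent cc"
proof (rule Bseq_monoseq_convergent)
  show "Bseq cc"
  proof (rule BseqI')
    fix n
    have "cc n \<le> cc 0" using cc_decseq by (simp add: decseq_def)
    then show "norm (cc n) \<le> cc 0" using cc_nonneg[of n] by simp
  qed
  show "monoseq cc" using cc_decseq unfolding monoseq_def decseq_def by blast
qed

lemma ms_entropy_lim: "ms_entropy m \<mu> = lim cc"
proof -
  have "cc \<longlonglongrightarrow> lim cc" using cc_convergent convergent_LIMSEQ_iff by blast
  then have "(\<lambda>n. (1 / real n) * HH n) \<longlonglongrightarrow> lim cc"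
    unfolding HH_sum by (rule cesaro_dec[OF cc_decseq])
  then show ?thesis unfolding ms_entropy_HH by (rule limI)
qed

lemma ms_entropy_le: "ms_entropy m \<mu> \<le> cc n"
proof -
  have "cc \<longlonglongrightarrow> lim cc" using cc_convergent convergent_LIMSEQ_iff by blast
  then show ?thesis unfolding ms_entropy_lim using decseq_ge[OF cc_decseq] by blast
qed

lemma ms_entropy_eq: assumes "\<And>n. n \<ge> N \<Longrightarrow> cc n = cc N" shows "ms_entropy m \<mu> = cc N"
proof -
  have "(\<lambda>n. cc (n + N)) = (\<lambda>n. cc N)" by (rule ext, rule assms) simp
  then have "(\<lambda>n. cc (n + N)) \<longlonglongrightarrow> cc N" by simp
  then have "cc \<longlonglongrightarrow> cc N" by (rule LIMSEQ_offset)
  then show ?thesis unfolding ms_entropy_lim by (rule limI)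
qed

end


definition rep :: "nat \<Rightarrow> nat \<Rightarrow> (nat \<Rightarrow> nat list) \<Rightarrow> nat \<Rightarrow> nat \<Rightarrow> nat" where
  "rep r k ws = restrict (\<lambda>i j. if j < k then ws i ! j else 0) {..<r}"

definition Wr :: "nat \<Rightarrow> nat \<Rightarrow> nat \<Rightarrow> (nat \<Rightarrow> nat list) set" where
  "Wr m r k = PiE {..<r} (\<lambda>_. words m k)"

definition polyP :: "nat \<Rightarrow> nat \<Rightarrow> nat \<Rightarrow> ((nat \<Rightarrow> nat \<Rightarrow> nat) \<Rightarrow> real) \<Rightarrow> (nat list \<Rightarrow> real) \<Rightarrow> real" where
  "polyP m r k \<Phi> \<pi> = (\<Sum>ws\<in>Wr m r k. \<Phi> (rep r k ws) * (\<Prod>i<r. \<pi> (ws i)))"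

lemma finite_Wr: "finite (Wr m r k)"
  unfolding Wr_def by (intro finite_PiE) (auto simp: finite_words)

lemma rep_space:
  assumes "m > 0" "ws \<in> Wr m r k"
  shows "rep r k ws \<in> space (PiM {..<r} (\<lambda>_. shift_space m))"
  using assms unfolding rep_def Wr_def
  by (auto simp: space_PiM space_shift_space words_def PiE_def Pi_def extensional_def subset_iff)

lemma in_Cyl_iff:
  assumes "x \<in> space (PiM {..<r} (\<lambda>_. shift_space m))" "ws \<in> Wr m r k"
  shows "x \<in> PiE {..<r} (\<lambda>i. cyl m (ws i)) \<longleftrightarrow> (\<forall>i<r. \<forall>j<k. x i j = ws i ! j)"
  using assms unfolding Wr_def cyl_def words_def by (auto simp: space_PiM PiE_def Pi_def)

lemma phi_integral:
  fixes \<mu> :: "(nat \<Rightarrow> nat) measure"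
  assumes sp: "shift_prob m \<mu>" and m: "m > 0" and dep: "depends_on_first m r k \<Phi>"
  shows "integral\<^sup>L (PiM {..<r} (\<lambda>_. \<mu>)) \<Phi> = polyP m r k \<Phi> (\<lambda>w. measure \<mu> (cyl m w))"
proof -
  interpret shift_prob m \<mu> by (rule sp)
  interpret prob_space \<mu> by (rule prob)
  interpret P: product_prob_space "\<lambda>_. \<mu>" "{..<r}" by unfold_locales
  let ?N = "PiM {..<r} (\<lambda>_. \<mu>)"
  let ?S = "PiM {..<r} (\<lambda>_. shift_space m)"
  let ?C = "\<lambda>ws. PiE {..<r} (\<lambda>i. cyl m (ws i))"
  have setsN: "sets ?N = sets ?S" by (rule sets_PiM_cong) (auto simp: sets_mu)
  have spaceN: "space ?N = space ?S" using setsN by (rule sets_eq_imp_space_eq)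
  have Csets: "?C ws \<in> sets ?N" for ws
    by (rule sets_PiM_I_finite) auto
  have measC: "measure ?N (?C ws) = (\<Prod>i<r. measure \<mu> (cyl m (ws i)))" for ws
  proof -
    have "emeasure ?N (?C ws) = (\<Prod>i<r. emeasure \<mu> (cyl m (ws i)))"
      by (rule P.emeasure_PiM) auto
    also have "\<dots> = (\<Prod>i<r. ennreal (measure \<mu> (cyl m (ws i))))"
      by (simp only: emeasure_eq_measure)
    also have "\<dots> = ennreal (\<Prod>i<r. measure \<mu> (cyl m (ws i)))"
      by (rule prod_ennreal) simp
    finally have "ennreal (measure ?N (?C ws)) = ennreal (\<Prod>i<r. measure \<mu> (cyl m (ws i)))"
      by (simp only: P.emeasure_eq_measure)
    then show ?thesis by (rule ennreal_inj[THEN iffD1, rotated 2]) (auto intro: prod_nonneg)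
  qed
  have pt: "\<Phi> x = (\<Sum>ws\<in>Wr m r k. \<Phi> (rep r k ws) * indicator (?C ws) x)" if x: "x \<in> space ?N" for x
  proof -
    define ws0 where "ws0 = restrict (\<lambda>i. map (x i) [0..<k]) {..<r}"
    have xS: "x \<in> space ?S" using x spaceN by simp
    have xi: "\<And>i j. i < r \<Longrightarrow> x i j < m" using xS by (auto simp: space_PiM space_shift_space)
    have ws0W: "ws0 \<in> Wr m r k" unfolding ws0_def Wr_def words_def using xi by auto
    have ind: "indicator (?C ws) x = (if ws = ws0 then 1 else 0 :: real)" if ws: "ws \<in> Wr m r k" for ws
    proof -
      have "x \<in> ?C ws \<longleftrightarrow> ws = ws0"
      proof
        assume "x \<in> ?C ws"
        then have h: "\<forall>i<r. \<forall>j<k. x i j = ws i ! j" using in_Cyl_iff[OF xS ws] by simp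
        show "ws = ws0"
        proof (rule ext)
          fix i show "ws i = ws0 i"
          proof (cases "i < r")
            case True
            then have "length (ws i) = k" using ws unfolding Wr_def words_def by auto
            then show ?thesis using True h unfolding ws0_def by (auto intro: nth_equalityI)
          next
            case False
            then show ?thesis using ws unfolding Wr_def ws0_def by (auto simp: PiE_def extensional_def)
          qed
        qed
      next
        assume "ws = ws0"
        then show "x \<in> ?C ws" using in_Cyl_iff[OF xS ws] unfolding ws0_def by auto
      qed
      then show ?thesis by (simp add: indicator_def)
    qed
    have "(\<Sum>ws\<in>Wr m r k. \<Phi> (rep r k ws) * indicator (?C ws) x) =
        (\<Sum>ws\<in>Wr m r k. if ws = ws0 then \<Phi> (rep r k ws) else 0)"
      by (rule sum.cong) (auto simp: ind)
    also have "\<dots> = \<Phi> (rep r k ws0)" using ws0W finite_Wr by (simp add: sum.delta')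
    also have "\<dots> = \<Phi> x"
    proof -
      have "\<forall>i<r. \<forall>j<k. rep r k ws0 i j = x i j" unfolding rep_def ws0_def by simp
      then show ?thesis using dep rep_space[OF m ws0W] xS unfolding depends_on_first_def by blast
    qed
    finally show ?thesis by simp
  qed
  have "integral\<^sup>L ?N \<Phi> = integral\<^sup>L ?N (\<lambda>x. \<Sum>ws\<in>Wr m r k. \<Phi> (rep r k ws) * indicator (?C ws) x)"
    by (rule Bochner_Integration.integral_cong) (auto simp: pt)
  also have "\<dots> = (\<Sum>ws\<in>Wr m r k. \<Phi> (rep r k ws) * measure ?N (?C ws))"
  proof -
    have "integral\<^sup>L ?N (\<lambda>x. \<Sum>ws\<in>Wr m r k. \<Phi> (rep r k ws) * indicator (?C ws) x) =
        (\<Sum>ws\<in>Wr m r k. integral\<^sup>L ?N (\<lambda>x. \<Phi> (rep r k ws) * indicator (?C ws) x))"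
      by (rule Bochner_Integration.integral_sum[where f="\<lambda>ws x. \<Phi> (rep r k ws) * indicator (?C ws) x"]) (auto intro!: integrable_mult_right integrable_real_indicator Csets simp: P.emeasure_eq_measure)
    also have "\<dots> = (\<Sum>ws\<in>Wr m r k. \<Phi> (rep r k ws) * measure ?N (?C ws))"
    proof (rule sum.cong[OF refl])
      fix ws
      have "?C ws \<inter> space ?N = ?C ws" using Csets[of ws] by (rule sets.Int_space_eq2)
      then show "integral\<^sup>L ?N (\<lambda>x. \<Phi> (rep r k ws) * indicator (?C ws) x) = \<Phi> (rep r k ws) * measure ?N (?C ws)"
        by simp
    qed
    finally show ?thesis .
  qed
  also have "\<dots> = polyP m r k \<Phi> (\<lambda>w. measure \<mu> (cyl m w))"
    unfolding polyP_def measC ..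
  finally show ?thesis .
qed


lemma xlnx_cont: "continuous_on {0..} (\<lambda>t::real. t * ln t)"
proof -
  have "\<forall>x\<in>{0..}. continuous (at x within {0..}) (\<lambda>t::real. t * ln t)"
  proof
    fix x :: real assume x: "x \<in> {0..}"
    show "continuous (at x within {0..}) (\<lambda>t::real. t * ln t)"
    proof (cases "x = 0")
      case True
      have "((\<lambda>t::real. t * ln t) \<longlongrightarrow> 0) (at_right 0)" by real_asymp
      then show ?thesis unfolding True continuous_within at_within_Ici_at_right by simp
    next
      case False
      then have "x > 0" using x by simp
      then have "isCont (\<lambda>t::real. t * ln t) x" by (intro continuous_intros) auto
      then show ?thesis by (rule continuous_at_imp_continuous_at_within)
    qed
  qed
  then show ?thesis using continuous_on_eq_continuous_within by blast
qed

definition Box :: "nat \<Rightarrow> nat \<Rightarrow> (nat list \<Rightarrow> real) set" where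
  "Box m k = PiE UNIV (\<lambda>w. if w \<in> words m k then {0..1} else {0})"

definition statc :: "nat \<Rightarrow> nat \<Rightarrow> (nat list \<Rightarrow> real) \<Rightarrow> bool" where
  "statc m k \<pi> \<longleftrightarrow> (\<forall>u\<in>words m (k - 1). (\<Sum>a<m. \<pi> (a # u)) = (\<Sum>a<m. \<pi> (u @ [a])))"

definition Kset :: "nat \<Rightarrow> nat \<Rightarrow> nat \<Rightarrow> ((nat \<Rightarrow> nat \<Rightarrow> nat) \<Rightarrow> real) \<Rightarrow> real \<Rightarrow> (nat list \<Rightarrow> real) set" where
  "Kset m r k \<Phi> \<alpha> = {\<pi> \<in> Box m k. (\<Sum>w\<in>words m k. \<pi> w) = 1 \<and> statc m k \<pi> \<and> polyP m r k \<Phi> \<pi> = \<alpha>}"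

definition Fent :: "nat \<Rightarrow> nat \<Rightarrow> (nat list \<Rightarrow> real) \<Rightarrow> real" where
  "Fent m k \<pi> = (\<Sum>u\<in>words m (k - 1). \<Sum>a<m. - gg (\<pi> (u @ [a])) (\<Sum>b<m. \<pi> (u @ [b])))"

lemma coord_cont: "continuous_on UNIV (\<lambda>\<pi>::nat list \<Rightarrow> real. \<pi> w)"
  by simp

lemma compact_Box: "compact (Box m k)"
proof -
  have "compactin (product_topology (\<lambda>_. euclidean) UNIV)
      (PiE UNIV (\<lambda>w::nat list. if w \<in> words m k then {0..1::real} else {0}))"
    by (subst compactin_PiE) auto
  then show ?thesis unfolding Box_def euclidean_product_topology by simp
qed

lemma polyP_cont: "continuous_on UNIV (polyP m r k \<Phi>)"
  unfolding polyP_def by (intro continuous_intros coord_cont)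

lemma closed_Kpart: "closed {\<pi>::nat list \<Rightarrow> real. (\<Sum>w\<in>words m k. \<pi> w) = 1 \<and> statc m k \<pi> \<and> polyP m r k \<Phi> \<pi> = \<alpha>}"
proof -
  have c1: "closed {\<pi>::nat list \<Rightarrow> real. (\<Sum>w\<in>words m k. \<pi> w) = 1}"
    by (rule closed_Collect_eq) (intro continuous_intros coord_cont)+
  have c2: "closed (\<Inter>u\<in>words m (k - 1). {\<pi>::nat list \<Rightarrow> real. (\<Sum>a<m. \<pi> (a # u)) = (\<Sum>a<m. \<pi> (u @ [a]))})"
    by (intro closed_INT ballI closed_Collect_eq) (intro continuous_intros coord_cont)+
  have c3: "closed {\<pi>::nat list \<Rightarrow> real. polyP m r k \<Phi> \<pi> = \<alpha>}"
    by (rule closed_Collect_eq) (intro continuous_intros polyP_cont)+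
  have eq: "{\<pi>::nat list \<Rightarrow> real. (\<Sum>w\<in>words m k. \<pi> w) = 1 \<and> statc m k \<pi> \<and> polyP m r k \<Phi> \<pi> = \<alpha>} =
     {\<pi>. (\<Sum>w\<in>words m k. \<pi> w) = 1} \<inter> (\<Inter>u\<in>words m (k - 1). {\<pi>. (\<Sum>a<m. \<pi> (a # u)) = (\<Sum>a<m. \<pi> (u @ [a]))})
       \<inter> {\<pi>. polyP m r k \<Phi> \<pi> = \<alpha>}"
    unfolding statc_def by auto
  show ?thesis unfolding eq by (intro closed_Int c1 c2 c3)
qed

lemma compact_Kset: "compact (Kset m r k \<Phi> \<alpha>)"
proof -
  have eq: "Kset m r k \<Phi> \<alpha> = Box m k \<inter> {\<pi>. (\<Sum>w\<in>words m k. \<pi> w) = 1 \<and> statc m k \<pi> \<and> polyP m r k \<Phi> \<pi> = \<alpha>}"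
    unfolding Kset_def by auto
  show ?thesis unfolding eq by (rule compact_Int_closed[OF compact_Box closed_Kpart])
qed

lemma Box_nonneg: "\<pi> \<in> Box m k \<Longrightarrow> 0 \<le> \<pi> w"
  unfolding Box_def by (auto simp: PiE_iff split: if_splits)

lemma gg_sum_eq:
  fixes y :: "'b \<Rightarrow> real"
  assumes fin: "finite A" and y: "\<And>a. a \<in> A \<Longrightarrow> 0 \<le> y a"
  shows "(\<Sum>a\<in>A. - gg (y a) (\<Sum>b\<in>A. y b)) = (\<Sum>b\<in>A. y b) * ln (\<Sum>b\<in>A. y b) - (\<Sum>a\<in>A. y a * ln (y a))"
proof (cases "(\<Sum>b\<in>A. y b) = 0")
  case True
  then have "\<forall>a\<in>A. y a = 0" using sum_nonneg_eq_0_iff[OF fin] y by blast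
  then show ?thesis using True by (simp add: gg_def)
next
  case False
  define X where "X = (\<Sum>b\<in>A. y b)"
  have X: "X > 0" using False y unfolding X_def by (simp add: sum_nonneg order_less_le)
  have e: "- gg (y a) X = y a * ln X - y a * ln (y a)" if a: "a \<in> A" for a
  proof (cases "y a = 0")
    case True then show ?thesis by (simp add: gg_def)
  next
    case False
    then have "y a > 0" using y[OF a] by simp
    then show ?thesis using X by (simp add: gg_def ln_div algebra_simps)
  qed
  have "(\<Sum>a\<in>A. - gg (y a) X) = (\<Sum>a\<in>A. y a * ln X - y a * ln (y a))"
    by (rule sum.cong) (auto simp: e)
  also have "\<dots> = X * ln X - (\<Sum>a\<in>A. y a * ln (y a))"
    by (simp add: sum_subtractf sum_distrib_right X_def)
  finally show ?thesis unfolding X_def .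
qed

definition F2 :: "nat \<Rightarrow> nat \<Rightarrow> (nat list \<Rightarrow> real) \<Rightarrow> real" where
  "F2 m k \<pi> = (\<Sum>u\<in>words m (k - 1). (\<Sum>b<m. \<pi> (u @ [b])) * ln (\<Sum>b<m. \<pi> (u @ [b])) - (\<Sum>a<m. \<pi> (u @ [a]) * ln (\<pi> (u @ [a]))))"

lemma Fent_F2: "\<pi> \<in> Box m k \<Longrightarrow> Fent m k \<pi> = F2 m k \<pi>"
  unfolding Fent_def F2_def by (intro sum.cong refl gg_sum_eq) (auto intro: Box_nonneg)

lemma F2_cont: "continuous_on (Box m k) (F2 m k)"
proof -
  have comp: "continuous_on (Box m k) (\<lambda>\<pi>. g \<pi> * ln (g \<pi>))"
    if g: "continuous_on UNIV g" and gn: "\<And>\<pi>. \<pi> \<in> Box m k \<Longrightarrow> 0 \<le> g \<pi>" for g :: "(nat list \<Rightarrow> real) \<Rightarrow> real"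
  proof -
    have "continuous_on (Box m k) g" using g by (rule continuous_on_subset) simp
    then show ?thesis
      using continuous_on_compose2[OF xlnx_cont, of "Box m k" g] gn by auto
  qed
  show ?thesis unfolding F2_def
    by (intro continuous_intros comp ballI sum_nonneg coord_cont Box_nonneg) auto
qed

lemma Fent_cont: "continuous_on (Kset m r k \<Phi> \<alpha>) (Fent m k)"
proof -
  have "continuous_on (Kset m r k \<Phi> \<alpha>) (F2 m k)"
    using F2_cont by (rule continuous_on_subset) (auto simp: Kset_def)
  moreover have "continuous_on (Kset m r k \<Phi> \<alpha>) (Fent m k) = continuous_on (Kset m r k \<Phi> \<alpha>) (F2 m k)"
    by (rule continuous_on_cong) (auto simp: Kset_def Fent_F2)
  ultimately show ?thesis by simp
qed

lemma Kset_max: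
  assumes "Kset m r k \<Phi> \<alpha> \<noteq> {}"
  shows "\<exists>\<pi>\<in>Kset m r k \<Phi> \<alpha>. \<forall>\<pi>'\<in>Kset m r k \<Phi> \<alpha>. Fent m k \<pi>' \<le> Fent m k \<pi>"
  using continuous_attains_sup[OF compact_Kset assms Fent_cont] by blast


lemma gg_scale: "0 \<le> x \<Longrightarrow> gg (x * t) x = x * gg t 1"
  by (cases "x = 0") (auto simp: gg_def)

context kblock
begin

lemma Q_prepend_sum: "u \<in> words m n \<Longrightarrow> (\<Sum>v\<in>words m j. Q (v @ u)) = Q u"
proof (induction j arbitrary: u n)
  case 0 then show ?case by (simp add: words_0)
next
  case (Suc j)
  have "(\<Sum>v\<in>words m (Suc j). Q (v @ u)) = (\<Sum>a<m. \<Sum>v\<in>words m j. Q (a # v @ u))"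
    by (simp add: sum_words_cons)
  also have "\<dots> = (\<Sum>v\<in>words m j. \<Sum>a<m. Q (a # (v @ u)))" by (rule sum.swap)
  also have "\<dots> = (\<Sum>v\<in>words m j. Q (v @ u))"
  proof (rule sum.cong[OF refl])
    fix v assume "v \<in> words m j"
    then have "v @ u \<in> words m (j + n)" using words_append_mem Suc.prems by blast
    then show "(\<Sum>a<m. Q (a # (v @ u))) = Q (v @ u)" by (rule Q_cons_sum)
  qed
  finally show ?case using Suc.IH[OF Suc.prems] by simp
qed

lemma nu_shift_inv: "shift_inv m nu" by (rule inv_measuresD[OF nu_inv_measures])

definition hc :: "nat list \<Rightarrow> real" where "hc u = (\<Sum>a<m. - gg (cond u a) 1)"

lemma cc_nu: assumes n: "n \<ge> k - 1"
  shows "shift_prob.cc m nu n = (\<Sum>u\<in>words m (k - 1). Q u * hc u)"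
proof -
  interpret N: shift_inv m nu by (rule nu_shift_inv)
  have step1: "shift_prob.cc m nu n = (\<Sum>w\<in>words m n. Q w * hc w)"
    unfolding N.cc_def
  proof (rule sum.cong[OF refl])
    fix w assume w: "w \<in> words m n"
    have "(\<Sum>a<m. - gg (measure nu (cyl m (w @ [a]))) (measure nu (cyl m w))) =
        (\<Sum>a<m. - gg (Q w * cond w a) (Q w))"
      by (rule sum.cong[OF refl]) (simp add: measure_nu_cyl[OF w] measure_nu_cyl[OF words_snocI[OF w]] Q_snoc)
    also have "\<dots> = Q w * hc w"
      unfolding hc_def using Q_nonneg[OF w] by (simp add: gg_scale sum_distrib_left)
    finally show "(\<Sum>a<m. - gg (measure nu (cyl m (w @ [a]))) (measure nu (cyl m w))) = Q w * hc w" .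
  qed
  obtain j where j: "n = j + (k - 1)" using n by (metis le_add_diff_inverse2)
  have "(\<Sum>w\<in>words m n. Q w * hc w) = (\<Sum>v\<in>words m j. \<Sum>u\<in>words m (k - 1). Q (v @ u) * hc (v @ u))"
    unfolding j by (rule sum_words_append)
  also have "\<dots> = (\<Sum>v\<in>words m j. \<Sum>u\<in>words m (k - 1). Q (v @ u) * hc u)"
  proof (intro sum.cong refl)
    fix v u assume u: "u \<in> words m (k - 1)" and v: "v \<in> words m j"
    have lu: "length u = k - 1" "length v = j" using u v words_length by auto
    have "cond (v @ u) a = cond u a" for a unfolding cond_def using lu by simp
    then show "Q (v @ u) * hc (v @ u) = Q (v @ u) * hc u" unfolding hc_def by simp
  qed
  also have "\<dots> = (\<Sum>u\<in>words m (k - 1). \<Sum>v\<in>words m j. Q (v @ u) * hc u)" by (rule sum.swap)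
  also have "\<dots> = (\<Sum>u\<in>words m (k - 1). Q u * hc u)"
    by (intro sum.cong refl) (simp add: sum_distrib_right[symmetric] Q_prepend_sum)
  finally show ?thesis using step1 by simp
qed

lemma ms_entropy_nu: "ms_entropy m nu = shift_prob.cc m nu (k - 1)"
proof -
  interpret N: shift_inv m nu by (rule nu_shift_inv)
  show ?thesis by (rule N.ms_entropy_eq) (simp add: cc_nu)
qed

end

lemma (in shift_prob) cc_Fent: "k \<ge> 1 \<Longrightarrow> cc (k - 1) = Fent m k (\<lambda>w. measure \<mu> (cyl m w))"
  unfolding cc_def Fent_def by (simp add: p_snoc[symmetric])

lemma Fent_cong: assumes "k \<ge> 1" "\<And>w. w \<in> words m k \<Longrightarrow> \<pi>1 w = \<pi>2 w"
  shows "Fent m k \<pi>1 = Fent m k \<pi>2"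
proof -
  have "\<And>u a. u \<in> words m (k - 1) \<Longrightarrow> a < m \<Longrightarrow> \<pi>1 (u @ [a]) = \<pi>2 (u @ [a])"
    using assms words_snocI[of _ m "k - 1"] by simp
  then show ?thesis unfolding Fent_def by (intro sum.cong refl) simp_all
qed

lemma polyP_cong: assumes "\<And>w. w \<in> words m k \<Longrightarrow> \<pi>1 w = \<pi>2 w"
  shows "polyP m r k \<Phi> \<pi>1 = polyP m r k \<Phi> \<pi>2"
  unfolding polyP_def
proof (intro sum.cong refl arg_cong2[where f="(*)"] prod.cong)
  fix ws i assume "ws \<in> Wr m r k" "i \<in> {..<r}"
  then have "ws i \<in> words m k" unfolding Wr_def by auto
  then show "\<pi>1 (ws i) = \<pi>2 (ws i)" by (rule assms)
qed


theorem theorem5p2: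
  fixes m r k :: nat and \<Phi> :: "(nat \<Rightarrow> nat \<Rightarrow> nat) \<Rightarrow> real" and \<alpha> :: real
  assumes "m \<ge> 2" and "r \<ge> 1" and "k \<ge> 1"
    and "depends_on_first m r k \<Phi>"
    and "level_measures m r \<Phi> \<alpha> \<noteq> {}"
  shows "\<exists>\<nu> \<in> level_measures m r \<Phi> \<alpha>. markov_measure m (k - 1) \<nu> \<and>
           (\<forall>\<mu> \<in> level_measures m r \<Phi> \<alpha>. ms_entropy m \<mu> \<le> ms_entropy m \<nu>)"
proof -
  have m0: "m > 0" using assms(1) by simp
  have k1: "k \<ge> 1" by (rule assms(3))
  have dep: "depends_on_first m r k \<Phi>" by (rule assms(4))
  define pv where "pv \<mu> = (\<lambda>w. if w \<in> words m k then measure \<mu> (cyl m w) else 0)" for \<mu> :: "(nat \<Rightarrow> nat) measure"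
  have pv_eq: "\<And>\<mu> w. w \<in> words m k \<Longrightarrow> measure \<mu> (cyl m w) = pv \<mu> w" unfolding pv_def by simp
  have pvK: "pv \<mu> \<in> Kset m r k \<Phi> \<alpha>" if mu: "\<mu> \<in> level_measures m r \<Phi> \<alpha>" for \<mu>
  proof -
    have inv: "\<mu> \<in> inv_measures m" and int: "integral\<^sup>L (PiM {..<r} (\<lambda>_. \<mu>)) \<Phi> = \<alpha>"
      using mu unfolding level_measures_def by auto
    interpret S: shift_inv m \<mu> by (rule inv_measuresD[OF inv])
    interpret prob_space \<mu> by (rule S.prob)
    have box: "pv \<mu> \<in> Box m k" unfolding Box_def pv_def by (auto simp: PiE_iff)
    have sum1: "(\<Sum>w\<in>words m k. pv \<mu> w) = 1"
      using S.sum_p_words[of k] by (simp add: pv_def)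
    have stat: "statc m k (pv \<mu>)"
      unfolding statc_def
    proof
      fix u assume u: "u \<in> words m (k - 1)"
      have ku: "Suc (k - 1) = k" using k1 by simp
      have "(\<Sum>a<m. pv \<mu> (a # u)) = (\<Sum>a<m. measure \<mu> (cyl m (a # u)))"
        by (rule sum.cong[OF refl]) (use words_consI[OF u] ku in \<open>simp add: pv_def\<close>)
      also have "\<dots> = measure \<mu> (cyl m u)" by (rule S.p_cons[symmetric])
      also have "\<dots> = (\<Sum>a<m. measure \<mu> (cyl m (u @ [a])))" by (rule S.p_snoc)
      also have "\<dots> = (\<Sum>a<m. pv \<mu> (u @ [a]))"
        by (rule sum.cong[OF refl]) (use words_snocI[OF u] ku in \<open>simp add: pv_def\<close>)
      finally show "(\<Sum>a<m. pv \<mu> (a # u)) = (\<Sum>a<m. pv \<mu> (u @ [a]))" .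
    qed
    have "polyP m r k \<Phi> (pv \<mu>) = polyP m r k \<Phi> (\<lambda>w. measure \<mu> (cyl m w))"
      by (rule polyP_cong) (simp add: pv_def)
    also have "\<dots> = \<alpha>" using phi_integral[OF S.shift_prob_axioms m0 dep] int by simp
    finally show ?thesis using box sum1 stat unfolding Kset_def by simp
  qed
  have ent_le: "ms_entropy m \<mu> \<le> Fent m k (pv \<mu>)" if mu: "\<mu> \<in> level_measures m r \<Phi> \<alpha>" for \<mu>
  proof -
    have inv: "\<mu> \<in> inv_measures m" using mu unfolding level_measures_def by auto
    interpret S: shift_inv m \<mu> by (rule inv_measuresD[OF inv])
    have "ms_entropy m \<mu> \<le> S.cc (k - 1)" by (rule S.ms_entropy_le)
    also have "\<dots> = Fent m k (\<lambda>w. measure \<mu> (cyl m w))" by (rule S.cc_Fent[OF k1])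
    also have "\<dots> = Fent m k (pv \<mu>)" by (rule Fent_cong[OF k1]) (simp add: pv_def)
    finally show ?thesis .
  qed
  obtain \<mu>0 where mu0: "\<mu>0 \<in> level_measures m r \<Phi> \<alpha>" using assms(5) by blast
  have "Kset m r k \<Phi> \<alpha> \<noteq> {}" using pvK[OF mu0] by blast
  then obtain ps where ps: "ps \<in> Kset m r k \<Phi> \<alpha>" and psmax: "\<And>\<pi>'. \<pi>' \<in> Kset m r k \<Phi> \<alpha> \<Longrightarrow> Fent m k \<pi>' \<le> Fent m k ps"
    using Kset_max by blast
  have psB: "ps \<in> Box m k" and ps1: "(\<Sum>w\<in>words m k. ps w) = 1" and psS: "statc m k ps"
    and psP: "polyP m r k \<Phi> ps = \<alpha>"
    using ps unfolding Kset_def by auto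
  have kb: "kblock m k ps"
    unfolding kblock_def using m0 k1 ps1 psS Box_nonneg[OF psB] unfolding statc_def by blast
  interpret K: kblock m k ps by (rule kb)
  interpret N: shift_inv m K.nu by (rule K.nu_shift_inv)
  have nu_level: "K.nu \<in> level_measures m r \<Phi> \<alpha>"
  proof -
    have "integral\<^sup>L (PiM {..<r} (\<lambda>_. K.nu)) \<Phi> = polyP m r k \<Phi> (\<lambda>w. measure K.nu (cyl m w))"
      by (rule phi_integral[OF N.shift_prob_axioms m0 dep])
    also have "\<dots> = polyP m r k \<Phi> ps" by (rule polyP_cong) (rule K.nu_block)
    finally show ?thesis using psP K.nu_inv_measures unfolding level_measures_def by simp
  qed
  have nu_ent: "ms_entropy m K.nu = Fent m k ps"
  proof -
    have "ms_entropy m K.nu = N.cc (k - 1)" by (rule K.ms_entropy_nu)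
    also have "\<dots> = Fent m k (\<lambda>w. measure K.nu (cyl m w))" by (rule N.cc_Fent[OF k1])
    also have "\<dots> = Fent m k ps" by (rule Fent_cong[OF k1]) (rule K.nu_block)
    finally show ?thesis .
  qed
  show ?thesis
  proof (intro bexI[OF _ nu_level] conjI K.nu_markov ballI)
    fix \<mu> assume mu: "\<mu> \<in> level_measures m r \<Phi> \<alpha>"
    have "ms_entropy m \<mu> \<le> Fent m k (pv \<mu>)" by (rule ent_le[OF mu])
    also have "\<dots> \<le> Fent m k ps" by (rule psmax[OF pvK[OF mu]])
    also have "\<dots> = ms_entropy m K.nu" by (rule nu_ent[symmetric])
    finally show "ms_entropy m \<mu> \<le> ms_entropy m K.nu" .
  qed
qed


end
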